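(* Let $v\geq 8$ be even. If a symmetric configuration $v_3$ has no blocking set, then its Levi graph is not Hamiltonian.
   Context: A symmetric configuration $v_3$ consists of a set of $v$ points and a collection of $v$ blocks, each block being a 3-element subset of the points, such that every point lies in exactly 3 blocks and any two distinct points lie in at most one common block. Its Levi graph is the bipartite graph whose vertices are the points and blocks, a point being adjacent to each block containing it. A blocking set is a subset $Q$ of the points such that every block contains at least one point of $Q$ and at least one point not in $Q$. *)

theory Defs
  imports Main
begin

definition sym_config_v3 :: "nat \<Rightarrow> 'a set \<Rightarrow> 'a set set \<Rightarrow> bool" where
  "sym_config_v3 v P B \<longleftrightarrow>
     finite P \<and> card P = v \<and> card B = v \<and>
     (\<forall>b\<in>B. b \<subseteq> P \<and> card b = 3) \<and>
     (\<forall>p\<in>P. card {b\<in>B. p \<in> b} = 3) \<and>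
     (\<forall>p\<in>P. \<forall>q\<in>P. p \<noteq> q \<longrightarrow> card {b\<in>B. p \<in> b \<and> q \<in> b} \<le> 1)"

definition blocking_set :: "'a set \<Rightarrow> 'a set set \<Rightarrow> 'a set \<Rightarrow> bool" where
  "blocking_set P B Q \<longleftrightarrow> Q \<subseteq> P \<and>
     (\<forall>b\<in>B. (\<exists>x\<in>b. x \<in> Q) \<and> (\<exists>x\<in>b. x \<notin> Q))"

definition levi_vertices :: "'a set \<Rightarrow> 'a set set \<Rightarrow> ('a + 'a set) set" where
  "levi_vertices P B = Inl ` P \<union> Inr ` B"

fun levi_adj :: "'a set \<Rightarrow> 'a set set \<Rightarrow> ('a + 'a set) \<Rightarrow> ('a + 'a set) \<Rightarrow> bool" where
  "levi_adj P B (Inl p) (Inr b) = (p \<in> P \<and> b \<in> B \<and> p \<in> b)"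
| "levi_adj P B (Inr b) (Inl p) = (p \<in> P \<and> b \<in> B \<and> p \<in> b)"
| "levi_adj P B _ _ = False"

definition hamiltonian :: "'v set \<Rightarrow> ('v \<Rightarrow> 'v \<Rightarrow> bool) \<Rightarrow> bool" where
  "hamiltonian V adj \<longleftrightarrow> (\<exists>c. distinct c \<and> set c = V \<and> length c \<ge> 3 \<and>
     (\<forall>i < length c. adj (c ! i) (c ! ((i + 1) mod length c))))"

end

theory Submission
  imports Defs
begin

lemma mod4_lemma:
  fixes n a :: nat
  assumes "4 dvd n" "a < n" "b < n" "(a + 2) mod n = b"
  shows "(a mod 4 < 2) \<longleftrightarrow> \<not> (b mod 4 < 2)"
proof (cases "a + 2 < n")
  case True
  then have "b = a + 2" using assms by simp
  then show ?thesis by presburger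
next
  case False
  have "n \<ge> 4" using assms(1,2) by (simp add: dvd_imp_le)
  then have "a + 2 < 2 * n" using assms by simp
  then have "b = a + 2 - n" using assms False
    by (simp add: mod_if split: if_splits)
  moreover obtain m where "n = 4 * m" using assms(1) by (auto elim!: dvdE)
  ultimately show ?thesis using \<open>a < n\<close> False by presburger
qed

theorem mainTheorem11:
  fixes v :: nat and P :: "'a set" and B :: "'a set set"
  assumes "v \<ge> 8" and "even v"
    and "sym_config_v3 v P B"
    and "\<not> (\<exists>Q. blocking_set P B Q)"
  shows "\<not> hamiltonian (levi_vertices P B) (levi_adj P B)"
proof
  assume "hamiltonian (levi_vertices P B) (levi_adj P B)"
  then obtain c where dc: "distinct c" and sc: "set c = levi_vertices P B"
    and adj: "\<forall>i < length c. levi_adj P B (c ! i) (c ! ((i + 1) mod length c))"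
    unfolding hamiltonian_def by blast
  define n where "n = length c"
  have fP: "finite P" and cP: "card P = v" and cB: "card B = v"
    using assms(3) unfolding sym_config_v3_def by auto
  have fB: "finite B" using cB assms(1) card.infinite by fastforce
  have "card (levi_vertices P B) = card P + card B"
    unfolding levi_vertices_def
    by (subst card_Un_disjoint) (auto simp: fP fB card_image)
  then have n2v: "n = 2 * v" using sc dc distinct_card[OF dc] cP cB n_def by simp
  then have d4: "4 dvd n" using assms(2) by auto
  have npos: "n > 2" using n2v assms(1) by simp
  define Q where "Q = {p \<in> P. \<forall>i<n. c ! i = Inl p \<longrightarrow> i mod 4 < 2}"
  have Qiff: "p \<in> Q \<longleftrightarrow> i mod 4 < 2" if "i < n" "c ! i = Inl p" "p \<in> P" for i p
  proof -
    have "\<forall>k<n. c ! k = Inl p \<longrightarrow> k = i"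
      using that dc unfolding n_def by (metis nth_eq_iff_index_eq)
    then show ?thesis using that unfolding Q_def by blast
  qed
  have "blocking_set P B Q"
    unfolding blocking_set_def
  proof (intro conjI ballI)
    show "Q \<subseteq> P" unfolding Q_def by auto
  next
    fix b assume bB: "b \<in> B"
    then have "Inr b \<in> set c" using sc unfolding levi_vertices_def by auto
    then obtain j where j: "j < n" "c ! j = Inr b" by (metis in_set_conv_nth n_def)
    define k where "k = (j + n - 1) mod n"
    define l where "l = (j + 1) mod n"
    have k: "k < n" and l: "l < n" using npos by (auto simp: k_def l_def)
    have kj: "(k + 1) mod n = j" unfolding k_def using j npos
      by (simp add: mod_add_left_eq[symmetric] mod_if)
    have kl: "(k + 2) mod n = l" unfolding l_def
      using kj by (metis add.commute add.left_commute mod_add_right_eq one_add_one)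
    have a1: "levi_adj P B (c ! k) (Inr b)" using adj k kj j n_def by metis
    have a2: "levi_adj P B (Inr b) (c ! l)" using adj j l_def n_def by metis
    obtain p where p: "c ! k = Inl p" "p \<in> P" "p \<in> b" using a1
      by (cases "c ! k") auto
    obtain q where q: "c ! l = Inl q" "q \<in> P" "q \<in> b" using a2
      by (cases "c ! l") auto
    have "(k mod 4 < 2) \<longleftrightarrow> \<not> (l mod 4 < 2)" using mod4_lemma[OF d4 k l kl] .
    then have "p \<in> Q \<longleftrightarrow> q \<notin> Q" using Qiff[OF k p(1,2)] Qiff[OF l q(1,2)] by simp
    then show "\<exists>x\<in>b. x \<in> Q" "\<exists>x\<in>b. x \<notin> Q" using p q by blast+
  qed
  then show False using assms(4) by blast
qed

end
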